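(* Fix integers $n,m\ge1$, $k_1,k_2\ge0$ and $N\in\mathbb{N}$. When $\omega\to0$: if $k_2$ is odd, \[p_{1,k_1,k_2}(x,t)=\sum_{h=0}^N\frac{|t|^{2h+1}}{(2h+1)!}p_{1,k_1,k_2+2h+1}(x,0)+O\big(|t|^{2N+3}p_{1,k_1,k_2+2N+3}(x,0)\big);\] if $k_2$ is even, \[p_{1,k_1,k_2}(x,t)=\sum_{h=0}^N\frac{|t|^{2h}}{(2h)!}p_{1,k_1,k_2+2h}(x,0)+O\big(|t|^{2N+2}p_{1,k_1,k_2+2N+2}(x,0)\big).\]
   Context: For integers $n,m\ge1$, $k_1,k_2\ge0$ and $(x,t)\in\mathbb{R}^{2n}\times\mathbb{R}^m$, with $u_1$ the first standard basis vector of $\mathbb{R}^m$, \[p_{1,k_1,k_2}(x,t)=\frac{(-1)^{k_1}i^{k_2}}{(4\pi)^n(2\pi)^m}\int_{\mathbb{R}^m}e^{i|t|(\lambda,u_1)-\frac{|x|^2}{4}|\lambda|\coth|\lambda|}\frac{|\lambda|^{n+k_1}\cosh(|\lambda|)^{k_1}}{\sinh(|\lambda|)^{n+k_1}}(\lambda,u_1)^{k_2}\,d\lambda ,\] and $\omega=4|t|/|x|^2$. *)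

theory Defs
  imports "HOL-Analysis.Analysis"
begin

text \<open>First standard basis vector u_1 of R^m, where R^m is modelled as real^'m
  (m = CARD('m)); the coordinate labelled "first" is a fixed designated index.\<close>
definition u1 :: "real^'m" where
  "u1 = axis (SOME i. True) 1"

text \<open>The heat-kernel-type function p_{1,k1,k2}(x,t), x in R^{2n} (modelled as real^'k
  with CARD('k) = 2n), t in R^m.\<close>
definition p1 :: "nat \<Rightarrow> nat \<Rightarrow> nat \<Rightarrow> real^'k \<Rightarrow> real^'m \<Rightarrow> complex" where
  "p1 n k1 k2 x t =
     ((-1) ^ k1 * \<i> ^ k2 / complex_of_real ((4 * pi) ^ n * (2 * pi) ^ CARD('m))) *
     (\<integral> (l::real^'m). exp (\<i> * complex_of_real (norm t * (l \<bullet> u1))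
                 - complex_of_real (norm x ^ 2 / 4 * norm l * (cosh (norm l) / sinh (norm l))))
            * complex_of_real (norm l ^ (n + k1) * cosh (norm l) ^ k1 / sinh (norm l) ^ (n + k1))
            * complex_of_real ((l \<bullet> u1) ^ k2) \<partial>lborel)"

end

theory Submission imports Defs "HOL-Probability.Characteristic_Functions" begin

lemma sinh_ge_self: "0 \<le> (r::real) \<Longrightarrow> r \<le> sinh r"
  using real_le_x_sinh[of r] by (simp add: sinh_field_def exp_minus)

lemma rcoth_le: assumes "0 < (r::real)" shows "r * cosh r \<le> (1 + r) * sinh r"
proof -
  have "cosh r = sinh r + exp (-r)" using cosh_minus_sinh[of r] by simp
  moreover have "r * exp (-r) \<le> sinh r"
    using sinh_ge_self[of r] assms by (smt (verit) exp_le_one_iff mult_left_le neg_le_0_iff_le)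
  ultimately show ?thesis by (simp add: algebra_simps)
qed

lemma borel_cosh[measurable]: "(cosh::real\<Rightarrow>real) \<in> borel_measurable borel"
  by (intro borel_measurable_continuous_onI continuous_intros)
lemma borel_sinh[measurable]: "(sinh::real\<Rightarrow>real) \<in> borel_measurable borel"
  by (intro borel_measurable_continuous_onI continuous_intros)

lemma meas_test: "(\<lambda>l::real^'m. exp (\<i> * complex_of_real (s * (l \<bullet> u1))
                 - complex_of_real (a * norm l * (cosh (norm l) / sinh (norm l))))
            * complex_of_real (norm l ^ (n + k1) * cosh (norm l) ^ k1 / sinh (norm l) ^ (n + k1))
            * complex_of_real ((l \<bullet> u1) ^ k2)) \<in> borel_measurable lborel"
  by measurable

lemma int_exp_abs1: "integrable lborel (\<lambda>y::real. exp (- \<bar>y\<bar>))"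
proof (rule integrableI_bounded)
  show "(\<lambda>y::real. exp (- \<bar>y\<bar>)) \<in> borel_measurable lborel" by measurable
  let ?g = "\<lambda>y::real. ennreal (y^0 * exp (-y)) * indicator {0..} y"
  have g1: "(\<integral>\<^sup>+y. ?g y \<partial>lborel) = 1"
    using nn_intergal_power_times_exp_Ici[of 0] by simp
  have g2: "(\<integral>\<^sup>+y. ?g y \<partial>lborel) = ennreal \<bar>-1\<bar> * (\<integral>\<^sup>+y. ?g (0 + (-1) * y) \<partial>lborel)"
    by (rule nn_integral_real_affine) auto
  have "(\<integral>\<^sup>+y. ennreal (norm (exp (- \<bar>y::real\<bar>))) \<partial>lborel)
      \<le> (\<integral>\<^sup>+y. ?g y + ?g (0 + (-1) * y) \<partial>lborel)"
  proof (intro nn_integral_mono)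
    fix y :: real
    show "ennreal (norm (exp (- \<bar>y\<bar>))) \<le> ?g y + ?g (0 + (-1) * y)"
    proof (cases "y \<ge> 0")
      case True then show ?thesis by (simp add: indicator_def add_increasing2)
    next
      case False then show ?thesis by (simp add: indicator_def)
    qed
  qed
  also have "\<dots> = (\<integral>\<^sup>+y. ?g y \<partial>lborel) + (\<integral>\<^sup>+y. ?g (0 + (-1) * y) \<partial>lborel)"
    by (intro nn_integral_add) auto
  also have "\<dots> = 2" using g1 g2 by simp
  finally have h: "(\<integral>\<^sup>+y. ennreal (norm (exp (- \<bar>y::real\<bar>))) \<partial>lborel) \<le> 2" .
  show "(\<integral>\<^sup>+y. ennreal (norm (exp (- \<bar>y::real\<bar>))) \<partial>lborel) < \<infinity>"
    by (rule le_less_trans[OF h]) simp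
qed

lemma int_exp_abs: assumes "0 < c" shows "integrable lborel (\<lambda>y::real. exp (- (c * \<bar>y\<bar>)))"
proof -
  have "integrable lborel (\<lambda>y::real. exp (- \<bar>0 + c * y\<bar>))"
    by (rule lborel_integrable_real_affine[OF int_exp_abs1]) (use assms in auto)
  then show ?thesis using assms by (simp add: abs_mult)
qed

lemma int_exp_norm:
  assumes "0 < c" shows "integrable lborel (\<lambda>l::'a::euclidean_space. exp (- (c * norm l)))"
proof (rule integrableI_bounded)
  show "(\<lambda>l::'a. exp (- (c * norm l))) \<in> borel_measurable lborel" by measurable
  define c' where "c' = c / DIM('a)"
  have c': "0 < c'" using assms by (simp add: c'_def)
  have pt: "exp (- (c * norm l)) \<le> (\<Prod>b\<in>Basis. exp (- (c' * \<bar>l \<bullet> b\<bar>)))" for l :: 'a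
  proof -
    have "(\<Sum>b\<in>Basis. \<bar>l \<bullet> b\<bar>) \<le> (\<Sum>b\<in>(Basis::'a set). norm l)"
      by (intro sum_mono Basis_le_norm)
    then have "(\<Sum>b\<in>Basis. \<bar>l \<bullet> b\<bar>) \<le> DIM('a) * norm l" by simp
    then have "c' * (\<Sum>b\<in>Basis. \<bar>l \<bullet> b\<bar>) \<le> c * norm l"
      using assms by (simp add: c'_def field_simps)
    then show ?thesis
      by (simp add: exp_sum[symmetric] sum_negf sum_distrib_left[symmetric])
  qed
  have "(\<integral>\<^sup>+l. ennreal (norm (exp (- (c * norm l)))) \<partial>(lborel::'a measure))
       \<le> (\<integral>\<^sup>+l. (\<Prod>b\<in>Basis. ennreal (exp (- (c' * \<bar>l \<bullet> b\<bar>)))) \<partial>(lborel::'a measure))"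
    by (intro nn_integral_mono) (simp add: prod_ennreal pt ennreal_leI)
  also have "\<dots> = (\<Prod>b\<in>(Basis::'a set). (\<integral>\<^sup>+y. ennreal (exp (- (c' * \<bar>y\<bar>))) \<partial>lborel))"
    by (rule nn_integral_lborel_prod) auto
  also have "\<dots> < \<infinity>"
  proof -
    have "(\<integral>\<^sup>+y. ennreal (exp (- (c' * \<bar>y\<bar>))) \<partial>lborel) < \<infinity>"
      using int_exp_abs[OF c'] unfolding integrable_iff_bounded by simp
    then show ?thesis by (simp add: power_less_top_ennreal)
  qed
  finally show "(\<integral>\<^sup>+l. ennreal (norm (exp (- (c * norm l)))) \<partial>(lborel::'a measure)) < \<infinity>" .
qed

definition Vr :: "nat \<Rightarrow> nat \<Rightarrow> real \<Rightarrow> real \<Rightarrow> real" where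
  "Vr n k1 a r = exp (- (a * r * (cosh r / sinh r))) * (r ^ (n + k1) * cosh r ^ k1 / sinh r ^ (n + k1))"

lemma Vr_meas[measurable]: "Vr n k1 a \<in> borel_measurable borel"
  unfolding Vr_def by measurable

lemma Vr_nonneg: "0 \<le> r \<Longrightarrow> 0 \<le> Vr n k1 a r"
  unfolding Vr_def by (intro mult_nonneg_nonneg divide_nonneg_nonneg) auto

lemma Vr_bound:
  assumes "0 \<le> a" "1 \<le> n" "0 \<le> r"
  shows "Vr n k1 a r \<le> (1 + r) ^ k1 * exp (- (a * r))"
proof (cases "r = 0")
  case True then show ?thesis using assms by (simp add: Vr_def)
next
  case False
  then have r: "0 < r" using assms by simp
  have s: "0 < sinh r" using r by simp
  have c1: "1 \<le> cosh r / sinh r" using s sinh_le_cosh_real[of r] by simp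
  have e: "exp (- (a * r * (cosh r / sinh r))) \<le> exp (- (a * r))"
  proof -
    have "a * r * 1 \<le> a * r * (cosh r / sinh r)"
      by (rule mult_left_mono[OF c1]) (use assms r in simp)
    then show ?thesis by simp
  qed
  have eq: "r ^ (n + k1) * cosh r ^ k1 / sinh r ^ (n + k1) = (r / sinh r) ^ n * (r * cosh r / sinh r) ^ k1"
    by (simp add: power_add power_divide power_mult_distrib field_simps)
  have q1: "(r / sinh r) ^ n \<le> 1" using sinh_ge_self[of r] r s
    by (intro power_le_one) auto
  have q2: "(r * cosh r / sinh r) ^ k1 \<le> (1 + r) ^ k1"
    using rcoth_le[OF r] s r by (intro power_mono) (auto simp: divide_le_eq)
  have "(r / sinh r) ^ n * (r * cosh r / sinh r) ^ k1 \<le> 1 * (1 + r) ^ k1"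
    using q1 q2 s r by (intro mult_mono) auto
  then have "r ^ (n + k1) * cosh r ^ k1 / sinh r ^ (n + k1) \<le> (1 + r) ^ k1" using eq by simp
  then have "exp (- (a * r * (cosh r / sinh r))) * (r ^ (n + k1) * cosh r ^ k1 / sinh r ^ (n + k1))
     \<le> exp (- (a * r)) * (1 + r) ^ k1"
    using e r s by (intro mult_mono) (auto intro!: divide_nonneg_nonneg)
  then show ?thesis unfolding Vr_def by (simp add: mult.commute)
qed

lemma poly_exp:
  assumes a: "0 < a" and r: "0 \<le> r"
  shows "(1 + r) ^ K * exp (- (a * r)) \<le> (1 / (min 1 (a / (2 * (K + 1)))) ^ K) * exp (- (a / 2 * r))"
proof -
  define d where "d = min 1 (a / (2 * (K + 1)))"
  have d0: "0 < d" using a by (simp add: d_def)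
  have d1: "d \<le> 1" by (simp add: d_def)
  have dK: "d * K \<le> a / 2"
  proof -
    have "d * K \<le> a / (2 * (K + 1)) * K" by (intro mult_right_mono) (auto simp: d_def)
    also have "\<dots> \<le> a / 2" using a by (simp add: field_simps)
    finally show ?thesis .
  qed
  have "d * (1 + r) \<le> 1 + d * r" using d1 by (simp add: algebra_simps)
  also have "\<dots> \<le> exp (d * r)" by (rule exp_ge_add_one_self)
  finally have "(d * (1 + r)) ^ K \<le> exp (d * r) ^ K" using d0 r by (intro power_mono) auto
  also have "\<dots> = exp (d * K * r)" by (simp add: exp_of_nat_mult[symmetric] algebra_simps)
  also have "\<dots> \<le> exp (a / 2 * r)" using mult_right_mono[OF dK r] by simp
  finally have h: "d ^ K * (1 + r) ^ K \<le> exp (a / 2 * r)" by (simp add: power_mult_distrib)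
  have "(1 + r) ^ K * exp (- (a * r)) = (d ^ K * (1 + r) ^ K) * exp (- (a * r)) / d ^ K"
    using d0 by simp
  also have "\<dots> \<le> exp (a / 2 * r) * exp (- (a * r)) / d ^ K"
    using h d0 by (intro divide_right_mono mult_right_mono) auto
  also have "exp (a / 2 * r) * exp (- (a * r)) = exp (- (a / 2 * r))"
    by (simp add: exp_add[symmetric])
  finally show ?thesis by (simp add: d_def)
qed

lemma norm_u1[simp]: "norm (u1 :: real^'m) = 1"
  by (simp add: u1_def)

lemma abs_u1_le: "\<bar>(l::real^'m) \<bullet> u1\<bar> \<le> norm l"
  using Cauchy_Schwarz_ineq2[of l u1] by simp

lemma poly_exp_ex:
  assumes a: "0 < (a::real)"
  shows "\<exists>C\<ge>0. \<forall>r\<ge>0. (1 + r) ^ K * exp (- (a * r)) \<le> C * exp (- (a / 2 * r))"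
  using poly_exp[OF a] a by (intro exI[of _ "1 / (min 1 (a / (2 * (K + 1)))) ^ K"]) auto

lemma int_dom:
  fixes g :: "real^'m \<Rightarrow> 'b::{banach,second_countable_topology}"
  assumes a: "0 < a" and n: "1 \<le> n" and g: "g \<in> borel_measurable lborel"
    and b: "\<And>l. norm (g l) \<le> Vr n k1 a (norm l) * \<bar>l \<bullet> u1\<bar> ^ k"
  shows "integrable lborel g"
proof -
  obtain C where C0: "0 \<le> C" and
    Cb: "\<And>r. 0 \<le> r \<Longrightarrow> (1 + r) ^ (k1 + k) * exp (- (a * r)) \<le> C * exp (- (a / 2 * r))"
    using poly_exp_ex[OF a, of "k1 + k"] by blast
  have I: "integrable lborel (\<lambda>l::real^'m. C * exp (- (a / 2 * norm l)))"
    using int_exp_norm[of "a/2"] a by auto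
  have "AE l in lborel. norm (g l) \<le> norm (C * exp (- (a / 2 * norm l)))"
  proof (rule AE_I2)
    fix l :: "real^'m"
    have "norm (g l) \<le> Vr n k1 a (norm l) * \<bar>l \<bullet> u1\<bar> ^ k" by (rule b)
    also have "\<dots> \<le> ((1 + norm l) ^ k1 * exp (- (a * norm l))) * (1 + norm l) ^ k"
      using abs_u1_le[of l] Vr_bound[of a n "norm l" k1] a n
      by (intro mult_mono power_mono) auto
    also have "\<dots> = (1 + norm l) ^ (k1 + k) * exp (- (a * norm l))"
      by (simp add: power_add)
    also have "\<dots> \<le> C * exp (- (a / 2 * norm l))"
      by (rule Cb) simp
    also have "\<dots> = norm (C * exp (- (a / 2 * norm l)))" using C0 by simp
    finally show "norm (g l) \<le> norm (C * exp (- (a / 2 * norm l)))" .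
  qed
  then show ?thesis by (rule Bochner_Integration.integrable_bound[OF I g])
qed

definition G :: "nat \<Rightarrow> nat \<Rightarrow> real \<Rightarrow> nat \<Rightarrow> real \<Rightarrow> real^'m \<Rightarrow> complex" where
  "G n k1 a k s l = iexp (s * (l \<bullet> u1)) * complex_of_real (Vr n k1 a (norm l) * (l \<bullet> u1) ^ k)"

lemma G_meas[measurable]: "G n k1 a k s \<in> borel_measurable lborel"
  unfolding G_def by measurable

lemma G_int: assumes "0 < a" "1 \<le> n" shows "integrable lborel (G n k1 a k s)"
proof (rule int_dom[OF assms G_meas])
  fix l :: "real^'m"
  show "norm (G n k1 a k s l) \<le> Vr n k1 a (norm l) * \<bar>l \<bullet> u1\<bar> ^ k"
    unfolding G_def using Vr_nonneg[of "norm l" n k1 a]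
    by (simp add: norm_mult abs_mult power_abs norm_power)
qed

lemma W_int: assumes "0 < a" "1 \<le> n"
  shows "integrable lborel (\<lambda>l::real^'m. Vr n k1 a (norm l) * \<bar>l \<bullet> u1\<bar> ^ k)"
  by (rule int_dom[OF assms]) (auto simp: abs_mult power_abs Vr_nonneg)

lemma pt_eq:
  "exp (\<i> * complex_of_real (s * y) - complex_of_real b) * complex_of_real P * complex_of_real (y ^ k)
   = iexp (s * y) * complex_of_real (exp (- b) * P * y ^ k)"
proof -
  have "exp (\<i> * complex_of_real (s * y) - complex_of_real b) = iexp (s * y) / complex_of_real (exp b)"
    by (simp add: exp_diff exp_of_real)
  then show ?thesis by (simp add: exp_minus field_simps)
qed

lemma p1_eq:
  "p1 n k1 k x t = ((-1) ^ k1 * \<i> ^ k / complex_of_real ((4 * pi) ^ n * (2 * pi) ^ CARD('m)))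
      * (\<integral>(l::real^'m). G n k1 (norm x ^ 2 / 4) k (norm (t::real^'m)) l \<partial>lborel)"
  unfolding p1_def G_def Vr_def pt_eq ..

lemma G_meas_borel[measurable]: "G n k1 a k s \<in> borel_measurable borel"
  unfolding G_def by measurable

lemma lborel_uminus: "distr lborel borel (\<lambda>x::'a::euclidean_space. - x) = lborel"
proof -
  have "lborel = density (distr lborel borel (\<lambda>x::'a. 0 + (-1) *\<^sub>R x)) (\<lambda>_. \<bar>-1::real\<bar>^DIM('a))"
    by (rule lborel_affine) simp
  then show ?thesis by (simp add: density_1)
qed

lemma integral_reflect:
  fixes f :: "'a::euclidean_space \<Rightarrow> complex"
  assumes f[measurable]: "f \<in> borel_measurable borel"
  shows "(\<integral>l. f l \<partial>lborel) = (\<integral>l. f (- l) \<partial>lborel)"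
proof -
  have "(\<integral>l. f l \<partial>lborel) = (\<integral>l. f l \<partial>distr lborel borel (\<lambda>x::'a. - x))"
    by (simp add: lborel_uminus)
  also have "\<dots> = (\<integral>l. f (- l) \<partial>lborel)"
    by (rule integral_distr) auto
  finally show ?thesis .
qed

lemma G_odd: assumes "odd j" shows "(\<integral>l. G n k1 a j 0 (l::real^'m) \<partial>lborel) = 0"
proof -
  have "(\<integral>l. G n k1 a j 0 (l::real^'m) \<partial>lborel) = (\<integral>(l::real^'m). G n k1 a j 0 (- l) \<partial>lborel)"
    by (rule integral_reflect) measurable
  also have "\<dots> = (\<integral>(l::real^'m). - G n k1 a j 0 l \<partial>lborel)"
    by (rule Bochner_Integration.integral_cong) (use assms in \<open>auto simp: G_def\<close>)
  also have "\<dots> = - (\<integral>l. G n k1 a j 0 (l::real^'m) \<partial>lborel)" by simp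
  finally show ?thesis by simp
qed

lemma G_even: assumes "even j"
  shows "(\<integral>l. G n k1 a j 0 (l::real^'m) \<partial>lborel)
       = complex_of_real (\<integral>(l::real^'m). Vr n k1 a (norm l) * \<bar>l \<bullet> u1\<bar> ^ j \<partial>lborel)"
proof -
  have "(\<integral>l. G n k1 a j 0 (l::real^'m) \<partial>lborel)
      = (\<integral>(l::real^'m). complex_of_real (Vr n k1 a (norm l) * \<bar>l \<bullet> u1\<bar> ^ j) \<partial>lborel)"
    by (rule Bochner_Integration.integral_cong) (use assms in \<open>auto simp: G_def power_even_abs\<close>)
  also have "\<dots> = complex_of_real (\<integral>(l::real^'m). Vr n k1 a (norm l) * \<bar>l \<bullet> u1\<bar> ^ j \<partial>lborel)"
    by (rule integral_complex_of_real)
  finally show ?thesis .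
qed

lemma W_nonneg: "0 \<le> (\<integral>l. Vr n k1 a (norm l) * \<bar>(l::real^'m) \<bullet> u1\<bar> ^ j \<partial>lborel)"
  by (rule integral_nonneg_AE) (auto intro!: AE_I2 mult_nonneg_nonneg Vr_nonneg)

lemma est:
  assumes a: "0 < a" and n: "1 \<le> n" and s: "0 \<le> s"
  shows "norm ((\<integral>l. G n k1 a k s (l::real^'m) \<partial>lborel)
           - (\<Sum>j\<le>M. (\<i> * s) ^ j / fact j * (\<integral>l. G n k1 a (k + j) 0 (l::real^'m) \<partial>lborel)))
     \<le> s ^ (M + 1) / fact (M + 1) * (\<integral>l. Vr n k1 a (norm l) * \<bar>(l::real^'m) \<bullet> u1\<bar> ^ (k + M + 1) \<partial>lborel)"
proof -
  have GI: "\<And>k s. integrable lborel (G n k1 a k s :: real^'m \<Rightarrow> complex)" by (rule G_int[OF a n])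
  have "(\<integral>l. G n k1 a k s (l::real^'m) \<partial>lborel)
           - (\<Sum>j\<le>M. (\<i> * s) ^ j / fact j * (\<integral>l. G n k1 a (k + j) 0 (l::real^'m) \<partial>lborel))
      = (\<integral>l. G n k1 a k s (l::real^'m) - (\<Sum>j\<le>M. (\<i> * s) ^ j / fact j * G n k1 a (k + j) 0 l) \<partial>lborel)"
    using GI by (subst Bochner_Integration.integral_diff) (auto simp: integral_sum)
  also have "norm \<dots> \<le> (\<integral>l. s ^ (M + 1) / fact (M + 1) * (Vr n k1 a (norm l) * \<bar>(l::real^'m) \<bullet> u1\<bar> ^ (k + M + 1)) \<partial>lborel)"
  proof (rule Bochner_Integration.integral_norm_bound_integral)
    show "integrable lborel (\<lambda>l. G n k1 a k s (l::real^'m) - (\<Sum>j\<le>M. (\<i> * s) ^ j / fact j * G n k1 a (k + j) 0 l))"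
      using GI by auto
    show "integrable lborel (\<lambda>l. s ^ (M + 1) / fact (M + 1) * (Vr n k1 a (norm l) * \<bar>(l::real^'m) \<bullet> u1\<bar> ^ (k + M + 1)))"
      by (intro integrable_mult_right W_int[OF a n])
    fix l :: "real^'m"
    define y where "y = l \<bullet> u1"
    define V where "V = Vr n k1 a (norm l)"
    have V0: "0 \<le> V" unfolding V_def by (rule Vr_nonneg) simp
    have "G n k1 a k s l - (\<Sum>j\<le>M. (\<i> * s) ^ j / fact j * G n k1 a (k + j) 0 l)
        = complex_of_real (V * y ^ k) * (iexp (s * y) - (\<Sum>j\<le>M. (\<i> * complex_of_real (s * y)) ^ j / fact j))"
      by (simp add: G_def V_def y_def sum_distrib_left power_add power_mult_distrib algebra_simps)
    also have "norm \<dots> = (V * \<bar>y\<bar> ^ k) * norm (iexp (s * y) - (\<Sum>j\<le>M. (\<i> * complex_of_real (s * y)) ^ j / fact j))"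
      using V0 by (simp add: norm_mult abs_mult power_abs norm_power del: of_real_mult)
    also have "\<dots> \<le> (V * \<bar>y\<bar> ^ k) * (\<bar>s * y\<bar> ^ Suc M / fact (Suc M))"
      using V0 by (intro mult_left_mono iexp_approx1) auto
    also have "\<dots> = s ^ (M + 1) / fact (M + 1) * (V * \<bar>y\<bar> ^ (k + M + 1))"
      using s by (simp add: abs_mult power_mult_distrib power_add)
    finally show "norm (G n k1 a k s l - (\<Sum>j\<le>M. (\<i> * s) ^ j / fact j * G n k1 a (k + j) 0 l))
        \<le> s ^ (M + 1) / fact (M + 1) * (Vr n k1 a (norm l) * \<bar>l \<bullet> u1\<bar> ^ (k + M + 1))"
      by (simp add: V_def y_def)
  qed
  also have "\<dots> = s ^ (M + 1) / fact (M + 1) * (\<integral>l. Vr n k1 a (norm l) * \<bar>(l::real^'m) \<bullet> u1\<bar> ^ (k + M + 1) \<partial>lborel)"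
    by simp
  finally show ?thesis .
qed


lemma p1_eq':
  "p1 n k1 k x (t::real^'m) = ((-1) ^ k1 / complex_of_real ((4 * pi) ^ n * (2 * pi) ^ CARD('m))) * \<i> ^ k
      * (\<integral>(l::real^'m). G n k1 (norm x ^ 2 / 4) k (norm t) l \<partial>lborel)"
  unfolding p1_eq by simp

lemma core:
  fixes x :: "real^'k" and t :: "real^'m" and n k1 :: nat
  assumes x: "x \<noteq> 0" and n: "1 \<le> n" and ev: "even (k + M + 1)"
  defines "a \<equiv> norm x ^ 2 / 4"
    and "K \<equiv> (-1) ^ k1 / complex_of_real ((4 * pi) ^ n * (2 * pi) ^ CARD('m))"
  shows "norm (p1 n k1 k x t - K * \<i> ^ k * (\<Sum>j\<le>M. (\<i> * norm t) ^ j / fact j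
             * (\<integral>(l::real^'m). G n k1 a (k + j) 0 l \<partial>lborel)))
         \<le> 1 / fact (M + 1) * norm t ^ (M + 1) * norm (p1 n k1 (k + M + 1) x (0::real^'m))"
proof -
  have a: "0 < a" using x by (simp add: a_def)
  define W where "W = (\<integral>(l::real^'m). Vr n k1 a (norm l) * \<bar>l \<bullet> u1\<bar> ^ (k + M + 1) \<partial>lborel)"
  have W0: "0 \<le> W" unfolding W_def by (rule W_nonneg)
  have "p1 n k1 k x t - K * \<i> ^ k * (\<Sum>j\<le>M. (\<i> * norm t) ^ j / fact j
             * (\<integral>(l::real^'m). G n k1 a (k + j) 0 l \<partial>lborel))
      = K * \<i> ^ k * ((\<integral>(l::real^'m). G n k1 a k (norm t) l \<partial>lborel) - (\<Sum>j\<le>M. (\<i> * norm t) ^ j / fact j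
             * (\<integral>(l::real^'m). G n k1 a (k + j) 0 l \<partial>lborel)))"
    unfolding p1_eq' K_def a_def by (simp add: algebra_simps)
  also have "norm \<dots> = norm K * norm ((\<integral>(l::real^'m). G n k1 a k (norm t) l \<partial>lborel) - (\<Sum>j\<le>M. (\<i> * norm t) ^ j / fact j
             * (\<integral>(l::real^'m). G n k1 a (k + j) 0 l \<partial>lborel)))"
    by (simp add: norm_mult norm_power)
  also have "\<dots> \<le> norm K * (norm t ^ (M + 1) / fact (M + 1) * W)"
    unfolding W_def by (intro mult_left_mono est[OF a n]) auto
  also have "\<dots> = 1 / fact (M + 1) * norm t ^ (M + 1) * (norm K * W)" by simp
  also have "norm K * W = norm (p1 n k1 (k + M + 1) x (0::real^'m))"
  proof -
    have "p1 n k1 (k + M + 1) x (0::real^'m) = K * \<i> ^ (k + M + 1) * complex_of_real W"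
      unfolding p1_eq' K_def W_def a_def using G_even[OF ev] by simp
    then show ?thesis using W0 by (simp add: norm_mult norm_power)
  qed
  finally show ?thesis .
qed

lemma term_eq:
  fixes x :: "real^'k" and t :: "real^'m" and n k1 :: nat
  defines "a \<equiv> norm x ^ 2 / 4"
    and "K \<equiv> (-1) ^ k1 / complex_of_real ((4 * pi) ^ n * (2 * pi) ^ CARD('m))"
  shows "complex_of_real (norm t ^ j / fact j) * p1 n k1 (k + j) x (0::real^'m)
       = K * \<i> ^ k * ((\<i> * norm t) ^ j / fact j * (\<integral>(l::real^'m). G n k1 a (k + j) 0 l \<partial>lborel))"
  unfolding p1_eq' K_def a_def by (simp add: power_mult_distrib power_add field_simps)

lemma sum_split1: "(\<Sum>j\<le>2*(N::nat)+1. f j) = (\<Sum>h=0..N. f (2*h) + f (2*h+1) :: 'a::comm_monoid_add)"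
  by (induction N) (auto simp: atLeast0AtMost add.assoc)

lemma sum_split2: "(\<Sum>j\<le>2*(N::nat)+2. f j) = f 0 + (\<Sum>h=0..N. f (2*h+1) + f (2*h+2) :: 'a::comm_monoid_add)"
  by (induction N) (auto simp: atLeast0AtMost add.assoc)


theorem lemma4p8:
  fixes n k1 k2 N :: nat
  assumes "n \<ge> 1" and "CARD('k) = 2 * n"
  shows
   "(odd k2 \<longrightarrow>
      (\<exists>C \<delta>. \<delta> > 0 \<and> (\<forall>(x::real^'k) (t::real^'m). x \<noteq> 0 \<and> 4 * norm t / norm x ^ 2 < \<delta> \<longrightarrow>
        norm (p1 n k1 k2 x t
              - (\<Sum>h=0..N. complex_of_real (norm t ^ (2*h+1) / fact (2*h+1))
                               * p1 n k1 (k2 + 2*h + 1) x (0::real^'m)))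
        \<le> C * norm t ^ (2*N+3) * norm (p1 n k1 (k2 + 2*N + 3) x (0::real^'m))))) \<and>
    (even k2 \<longrightarrow>
      (\<exists>C \<delta>. \<delta> > 0 \<and> (\<forall>(x::real^'k) (t::real^'m). x \<noteq> 0 \<and> 4 * norm t / norm x ^ 2 < \<delta> \<longrightarrow>
        norm (p1 n k1 k2 x t
              - (\<Sum>h=0..N. complex_of_real (norm t ^ (2*h) / fact (2*h))
                               * p1 n k1 (k2 + 2*h) x (0::real^'m)))
        \<le> C * norm t ^ (2*N+2) * norm (p1 n k1 (k2 + 2*N + 2) x (0::real^'m)))))"
proof (intro conjI impI)
  have n: "1 \<le> n" using assms by simp
  assume odd: "odd k2"
  show "\<exists>C \<delta>. \<delta> > 0 \<and> (\<forall>(x::real^'k) (t::real^'m). x \<noteq> 0 \<and> 4 * norm t / norm x ^ 2 < \<delta> \<longrightarrow>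
        norm (p1 n k1 k2 x t
              - (\<Sum>h=0..N. complex_of_real (norm t ^ (2*h+1) / fact (2*h+1))
                               * p1 n k1 (k2 + 2*h + 1) x (0::real^'m)))
        \<le> C * norm t ^ (2*N+3) * norm (p1 n k1 (k2 + 2*N + 3) x (0::real^'m)))"
  proof (rule exI[of _ "1 / fact (2*N+3)"], rule exI[of _ "1::real"], intro conjI allI impI)
    fix x :: "real^'k" and t :: "real^'m"
    assume "x \<noteq> 0 \<and> 4 * norm t / norm x ^ 2 < 1"
    then have x: "x \<noteq> 0" by simp
    define a where "a = norm x ^ 2 / 4"
    define K where "K = (-1) ^ k1 / complex_of_real ((4 * pi) ^ n * (2 * pi) ^ CARD('m))"
    define tm where "tm j = K * \<i> ^ k2 * ((\<i> * norm t) ^ j / fact j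
             * (\<integral>(l::real^'m). G n k1 a (k2 + j) 0 l \<partial>lborel))" for j
    have tm_eq: "tm j = complex_of_real (norm t ^ j / fact j) * p1 n k1 (k2 + j) x (0::real^'m)" for j
      unfolding tm_def K_def a_def by (rule term_eq[symmetric])
    have tm0: "odd (k2 + j) \<Longrightarrow> tm j = 0" for j
      unfolding tm_def by (simp add: G_odd)
    have "(\<Sum>h=0..N. complex_of_real (norm t ^ (2*h+1) / fact (2*h+1))
                               * p1 n k1 (k2 + 2*h + 1) x (0::real^'m)) = (\<Sum>h=0..N. tm (2*h+1))"
      by (simp add: tm_eq add.assoc)
    also have "\<dots> = (\<Sum>j\<le>2*N+2. tm j)"
      unfolding sum_split2 using odd by (simp add: tm0)
    finally have S: "(\<Sum>h=0..N. complex_of_real (norm t ^ (2*h+1) / fact (2*h+1))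
                               * p1 n k1 (k2 + 2*h + 1) x (0::real^'m)) = (\<Sum>j\<le>2*N+2. tm j)" .
    have ev: "even (k2 + (2*N+2) + 1)" using odd by simp
    have "norm (p1 n k1 k2 x t - K * \<i> ^ k2 * (\<Sum>j\<le>2*N+2. (\<i> * norm t) ^ j / fact j
             * (\<integral>(l::real^'m). G n k1 a (k2 + j) 0 l \<partial>lborel)))
         \<le> 1 / fact (2*N+2 + 1) * norm t ^ (2*N+2 + 1) * norm (p1 n k1 (k2 + (2*N+2) + 1) x (0::real^'m))"
      unfolding K_def a_def by (rule core[OF x n ev])
    moreover have "K * \<i> ^ k2 * (\<Sum>j\<le>2*N+2. (\<i> * norm t) ^ j / fact j
             * (\<integral>(l::real^'m). G n k1 a (k2 + j) 0 l \<partial>lborel)) = (\<Sum>j\<le>2*N+2. tm j)"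
      unfolding tm_def by (rule sum_distrib_left)
    ultimately show "norm (p1 n k1 k2 x t
              - (\<Sum>h=0..N. complex_of_real (norm t ^ (2*h+1) / fact (2*h+1))
                               * p1 n k1 (k2 + 2*h + 1) x (0::real^'m)))
        \<le> 1 / fact (2*N+3) * norm t ^ (2*N+3) * norm (p1 n k1 (k2 + 2*N + 3) x (0::real^'m))"
      using S by (simp add: add.assoc numeral_3_eq_3)
  qed (simp)
next
  have n: "1 \<le> n" using assms by simp
  assume evk: "even k2"
  show "\<exists>C \<delta>. \<delta> > 0 \<and> (\<forall>(x::real^'k) (t::real^'m). x \<noteq> 0 \<and> 4 * norm t / norm x ^ 2 < \<delta> \<longrightarrow>
        norm (p1 n k1 k2 x t
              - (\<Sum>h=0..N. complex_of_real (norm t ^ (2*h) / fact (2*h))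
                               * p1 n k1 (k2 + 2*h) x (0::real^'m)))
        \<le> C * norm t ^ (2*N+2) * norm (p1 n k1 (k2 + 2*N + 2) x (0::real^'m)))"
  proof (rule exI[of _ "1 / fact (2*N+2)"], rule exI[of _ "1::real"], intro conjI allI impI)
    fix x :: "real^'k" and t :: "real^'m"
    assume "x \<noteq> 0 \<and> 4 * norm t / norm x ^ 2 < 1"
    then have x: "x \<noteq> 0" by simp
    define a where "a = norm x ^ 2 / 4"
    define K where "K = (-1) ^ k1 / complex_of_real ((4 * pi) ^ n * (2 * pi) ^ CARD('m))"
    define tm where "tm j = K * \<i> ^ k2 * ((\<i> * norm t) ^ j / fact j
             * (\<integral>(l::real^'m). G n k1 a (k2 + j) 0 l \<partial>lborel))" for j
    have tm_eq: "tm j = complex_of_real (norm t ^ j / fact j) * p1 n k1 (k2 + j) x (0::real^'m)" for j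
      unfolding tm_def K_def a_def by (rule term_eq[symmetric])
    have tm0: "odd (k2 + j) \<Longrightarrow> tm j = 0" for j
      unfolding tm_def by (simp add: G_odd)
    have "(\<Sum>h=0..N. complex_of_real (norm t ^ (2*h) / fact (2*h))
                               * p1 n k1 (k2 + 2*h) x (0::real^'m)) = (\<Sum>h=0..N. tm (2*h))"
      by (simp add: tm_eq)
    also have "\<dots> = (\<Sum>j\<le>2*N+1. tm j)"
      unfolding sum_split1 using evk by (simp add: tm0)
    finally have S: "(\<Sum>h=0..N. complex_of_real (norm t ^ (2*h) / fact (2*h))
                               * p1 n k1 (k2 + 2*h) x (0::real^'m)) = (\<Sum>j\<le>2*N+1. tm j)" .
    have ev: "even (k2 + (2*N+1) + 1)" using evk by simp
    have "norm (p1 n k1 k2 x t - K * \<i> ^ k2 * (\<Sum>j\<le>2*N+1. (\<i> * norm t) ^ j / fact j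
             * (\<integral>(l::real^'m). G n k1 a (k2 + j) 0 l \<partial>lborel)))
         \<le> 1 / fact (2*N+1 + 1) * norm t ^ (2*N+1 + 1) * norm (p1 n k1 (k2 + (2*N+1) + 1) x (0::real^'m))"
      unfolding K_def a_def by (rule core[OF x n ev])
    moreover have "K * \<i> ^ k2 * (\<Sum>j\<le>2*N+1. (\<i> * norm t) ^ j / fact j
             * (\<integral>(l::real^'m). G n k1 a (k2 + j) 0 l \<partial>lborel)) = (\<Sum>j\<le>2*N+1. tm j)"
      unfolding tm_def by (rule sum_distrib_left)
    ultimately show "norm (p1 n k1 k2 x t
              - (\<Sum>h=0..N. complex_of_real (norm t ^ (2*h) / fact (2*h))
                               * p1 n k1 (k2 + 2*h) x (0::real^'m)))
        \<le> 1 / fact (2*N+2) * norm t ^ (2*N+2) * norm (p1 n k1 (k2 + 2*N + 2) x (0::real^'m))"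
      using S by (simp add: add.assoc)
  qed (simp)
qed

end
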